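(* Let $H$ be a regular tournament with $2m+1$ vertices and let $v\in V(H)$. Suppose there is no directed cycle with vertices $p,q,r,s$ in order ($p\to q\to r\to s\to p$) such that $p,r$ are out-neighbours of $v$ and $q,s$ are in-neighbours of $v$. Then $H$ is cyclic.
   Context: A tournament $H$ is regular if all its vertices have the same outdegree and all have the same indegree (so $|V(H)|=2m+1$ and every vertex has in- and outdegree $m$). A tournament $H$ is cyclic if it has an odd number $2m+1$ of vertices and they can be ordered $v_1,\dots,v_{2m+1}$ so that for $1\le i<j\le 2m+1$, $v_i$ is adjacent to $v_j$ (edge $v_i\to v_j$) if and only if $j-i\le m$. *)

theory Defs
  imports Main
begin

definition tournament :: "'a set \<Rightarrow> ('a \<Rightarrow> 'a \<Rightarrow> bool) \<Rightarrow> bool" where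
  "tournament V E \<longleftrightarrow> finite V
     \<and> (\<forall>u w. E u w \<longrightarrow> u \<in> V \<and> w \<in> V)
     \<and> (\<forall>u\<in>V. \<not> E u u)
     \<and> (\<forall>u\<in>V. \<forall>w\<in>V. u \<noteq> w \<longrightarrow> (E u w \<longleftrightarrow> \<not> E w u))"

definition out_nbrs :: "'a set \<Rightarrow> ('a \<Rightarrow> 'a \<Rightarrow> bool) \<Rightarrow> 'a \<Rightarrow> 'a set" where
  "out_nbrs V E v = {w \<in> V. E v w}"

definition in_nbrs :: "'a set \<Rightarrow> ('a \<Rightarrow> 'a \<Rightarrow> bool) \<Rightarrow> 'a \<Rightarrow> 'a set" where
  "in_nbrs V E v = {w \<in> V. E w v}"

definition regular_tournament :: "'a set \<Rightarrow> ('a \<Rightarrow> 'a \<Rightarrow> bool) \<Rightarrow> bool" where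
  "regular_tournament V E \<longleftrightarrow> tournament V E
     \<and> (\<forall>u\<in>V. \<forall>w\<in>V. card (out_nbrs V E u) = card (out_nbrs V E w)
                     \<and> card (in_nbrs V E u) = card (in_nbrs V E w))"

definition cyclic_tournament :: "'a set \<Rightarrow> ('a \<Rightarrow> 'a \<Rightarrow> bool) \<Rightarrow> bool" where
  "cyclic_tournament V E \<longleftrightarrow> (\<exists>m::nat. card V = 2*m+1 \<and>
     (\<exists>f::nat \<Rightarrow> 'a. bij_betw f {1..2*m+1} V \<and>
        (\<forall>i j. 1 \<le> i \<longrightarrow> i < j \<longrightarrow> j \<le> 2*m+1 \<longrightarrow> (E (f i) (f j) \<longleftrightarrow> j - i \<le> m))))"

end

theory Submission
  imports Defs
begin

lemma tour_count:
  fixes W Y :: "'a set" and E :: "'a \<Rightarrow> 'a \<Rightarrow> bool"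
  assumes fin: "finite W" and sub: "Y \<subseteq> W"
    and irr: "\<forall>x\<in>W. \<not> E x x"
    and tot: "\<forall>x\<in>W. \<forall>y\<in>W. x \<noteq> y \<longrightarrow> (E x y \<longleftrightarrow> \<not> E y x)"
  shows "2 * (\<Sum>y\<in>Y. card {z\<in>W. E y z}) = card Y * card Y - card Y
           + 2 * card (SIGMA y:Y. {z\<in>W-Y. E y z})"
proof -
  have finY: "finite Y" using fin sub finite_subset by blast
  have s1: "card {z\<in>W. E y z} = card {z\<in>Y. E y z} + card {z\<in>W-Y. E y z}" if "y \<in> Y" for y
  proof -
    have "{z\<in>W. E y z} = {z\<in>Y. E y z} \<union> {z\<in>W-Y. E y z}" using sub by auto
    moreover have "finite {z\<in>Y. E y z}" "finite {z\<in>W-Y. E y z}" using finY fin by auto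
    ultimately show ?thesis by (simp add: card_Un_disjoint disjoint_iff)
  qed
  have "(\<Sum>y\<in>Y. card {z\<in>W. E y z}) = (\<Sum>y\<in>Y. card {z\<in>Y. E y z}) + (\<Sum>y\<in>Y. card {z\<in>W-Y. E y z})"
    using s1 by (simp add: sum.distrib)
  also have "(\<Sum>y\<in>Y. card {z\<in>Y. E y z}) = card (SIGMA y:Y. {z\<in>Y. E y z})"
    using finY by simp
  also have "(\<Sum>y\<in>Y. card {z\<in>W-Y. E y z}) = card (SIGMA y:Y. {z\<in>W-Y. E y z})"
    using finY fin by simp
  finally have e1: "(\<Sum>y\<in>Y. card {z\<in>W. E y z}) = card (SIGMA y:Y. {z\<in>Y. E y z}) + card (SIGMA y:Y. {z\<in>W-Y. E y z})" .
  define P where "P = (SIGMA y:Y. {z\<in>Y. E y z})"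
  define Q where "Q = prod.swap ` P"
  define D where "D = (\<lambda>x. (x,x)) ` Y"
  have cQ: "card Q = card P" unfolding Q_def by (simp add: card_image)
  have PQ: "P \<inter> Q = {}"
  proof (rule ccontr)
    assume "P \<inter> Q \<noteq> {}"
    then obtain a b where "(a,b) \<in> P" "(a,b) \<in> Q" by auto
    then have "a \<in> Y" "b \<in> Y" "E a b" "E b a" unfolding P_def Q_def by auto
    then show False using sub tot irr by (metis subsetD)
  qed
  have PQD: "P \<inter> D = {}" "Q \<inter> D = {}" using sub irr unfolding P_def Q_def D_def by auto
  have U: "Y \<times> Y = P \<union> Q \<union> D"
  proof
    show "Y \<times> Y \<subseteq> P \<union> Q \<union> D"
    proof
      fix p assume "p \<in> Y \<times> Y"
      then obtain a b where p: "p = (a,b)" "a \<in> Y" "b \<in> Y" by auto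
      show "p \<in> P \<union> Q \<union> D"
      proof (cases "a = b")
        case True then show ?thesis using p unfolding D_def by auto
      next
        case False
        then have "E a b \<or> E b a" using tot p sub by blast
        then show ?thesis using p unfolding P_def Q_def by (auto simp: image_iff)
      qed
    qed
  next
    show "P \<union> Q \<union> D \<subseteq> Y \<times> Y" unfolding P_def Q_def D_def by auto
  qed
  have finPQ: "finite P" "finite Q" "finite D" using finY unfolding P_def Q_def D_def by auto
  have cD: "card D = card Y" unfolding D_def by (simp add: card_image inj_on_def)
  have "card Y * card Y = card P + card Q + card D"
    using U finPQ PQ PQD card_Un_disjoint
    by (metis Int_Un_distrib2 Un_empty_left card_cartesian_product finite_UnI)
  then have "card Y * card Y - card Y = 2 * card P" using cQ cD by simp
  then show ?thesis using e1 unfolding P_def by simp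
qed

lemma int_dd: "(d::int) * (d - 1) \<ge> 0"
proof (cases "d \<le> 0")
  case True then show ?thesis by (simp add: mult_nonpos_nonpos)
next
  case False then show ?thesis by simp
qed

lemma numeric_step1:
  fixes A :: "'a set" and r :: "'a \<Rightarrow> nat"
  assumes finA: "finite A" and cA: "card A = m" and rle: "\<forall>a\<in>A. r a \<le> m"
   and tot: "2 * sum r A = m*(m+1)"
   and low: "\<forall>X\<subseteq>A. card X * (card X + 1) \<le> 2 * sum r X"
   and up: "\<forall>a\<in>A. (m - r a)*(m - r a + 1) \<le> 2 * (\<Sum>a'\<in>{a'\<in>A. r a < r a'}. (r a' - r a))"
   and a: "a \<in> A"
  shows "2 * sum r {a'\<in>A. r a' \<le> r a} = card {a'\<in>A. r a' \<le> r a} * (card {a'\<in>A. r a' \<le> r a} + 1)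
     \<and> (r a = card {a'\<in>A. r a' \<le> r a} \<or> r a = card {a'\<in>A. r a' \<le> r a} + 1)"
proof -
  define X where "X = {a'\<in>A. r a' \<le> r a}"
  define U where "U = {a'\<in>A. r a < r a'}"
  define x where "x = card X"
  define \<rho> where "\<rho> = r a"
  define T where "T = (\<Sum>a'\<in>U. (r a' - r a))"
  have finX: "finite X" "finite U" using finA unfolding X_def U_def by auto
  have AXU: "A = X \<union> U" "X \<inter> U = {}" unfolding X_def U_def by auto
  have cU: "card U = m - x" using AXU finX cA unfolding x_def by (metis card_Un_disjoint add_diff_cancel_left')
  have xm: "x \<le> m" using finA cA unfolding x_def X_def by (metis (no_types, lifting) card_mono mem_Collect_eq subsetI)
  have rm: "\<rho> \<le> m" using rle a unfolding \<rho>_def by auto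
  have sU: "sum r U = T + card U * \<rho>"
  proof -
    have "sum r U = (\<Sum>a'\<in>U. (r a' - r a) + r a)" by (rule sum.cong) (auto simp: U_def)
    also have "\<dots> = T + card U * \<rho>" by (simp add: sum.distrib T_def \<rho>_def)
    finally show ?thesis .
  qed
  have sA: "sum r A = sum r X + sum r U" using AXU finX by (simp add: sum.union_disjoint)
  have lowX: "x * (x+1) \<le> 2 * sum r X" using low unfolding x_def X_def by auto
  have upa: "(m - \<rho>) * (m - \<rho> + 1) \<le> 2 * T" using up a unfolding T_def U_def \<rho>_def by auto
  define S where "S = sum r X"
  have eq: "2 * int S + 2 * int T + 2 * (int m - int x) * int \<rho> = int m * (int m + 1)"
  proof -
    have "2 * S + 2 * T + 2 * (m - x) * \<rho> = m * (m+1)" using tot sA sU cU unfolding S_def by simp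
    then have "int (2 * S + 2 * T + 2 * (m - x) * \<rho>) = int (m * (m+1))" by simp
    then have "2 * int S + 2 * int T + 2 * int (m - x) * int \<rho> = int m * (int m + 1)"
      by (simp only: of_nat_add of_nat_mult of_nat_numeral of_nat_1)
    moreover have "int (m - x) = int m - int x" using xm by simp
    ultimately show ?thesis by simp
  qed
  have i1: "int x * (int x + 1) \<le> 2 * int S" using lowX unfolding S_def
    by (metis (mono_tags, opaque_lifting) of_nat_add of_nat_le_iff of_nat_mult of_nat_1 of_nat_numeral)
  have i2: "(int m - int \<rho>) * (int m - int \<rho> + 1) \<le> 2 * int T"
  proof -
    have "int ((m - \<rho>) * (m - \<rho> + 1)) \<le> int (2*T)" using upa by (simp only: of_nat_le_iff)
    then have "int (m - \<rho>) * (int (m - \<rho>) + 1) \<le> 2 * int T"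
      by (simp only: of_nat_add of_nat_mult of_nat_numeral of_nat_1)
    moreover have "int (m - \<rho>) = int m - int \<rho>" using rm by simp
    ultimately show ?thesis by simp
  qed
  have idt: "int x * (int x + 1) + (int m - int \<rho>) * (int m - int \<rho> + 1) + 2 * (int m - int x) * int \<rho> - int m * (int m + 1)
     = (int \<rho> - int x) * (int \<rho> - int x - 1)" by (simp add: algebra_simps)
  have dd: "(int \<rho> - int x) * (int \<rho> - int x - 1) \<ge> 0" by (rule int_dd)
  have z: "(int \<rho> - int x) * (int \<rho> - int x - 1) = 0" and sx: "int x * (int x + 1) = 2 * int S"
    using eq i1 i2 idt dd by linarith+
  from z have "\<rho> = x \<or> \<rho> = x + 1" by auto
  moreover have "2 * S = x * (x+1)" using sx by (metis of_nat_add of_nat_mult of_nat_1 of_nat_numeral of_nat_eq_iff)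
  ultimately show ?thesis unfolding S_def X_def x_def \<rho>_def by auto
qed

lemma numeric:
  fixes A :: "'a set" and r :: "'a \<Rightarrow> nat"
  assumes finA: "finite A" and cA: "card A = m" and rle: "\<forall>a\<in>A. r a \<le> m"
   and tot: "2 * sum r A = m*(m+1)"
   and low: "\<forall>X\<subseteq>A. card X * (card X + 1) \<le> 2 * sum r X"
   and up: "\<forall>a\<in>A. (m - r a)*(m - r a + 1) \<le> 2 * (\<Sum>a'\<in>{a'\<in>A. r a < r a'}. (r a' - r a))"
  shows "inj_on r A \<and> (\<forall>a\<in>A. 1 \<le> r a)"
proof -
  note st = numeric_step1[OF finA cA rle tot low up]
  have main: "card {a'\<in>A. r a' = r a} = 1 \<and> 1 \<le> r a" if a: "a \<in> A" for a
  proof -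
    define X where "X = {a'\<in>A. r a' \<le> r a}"
    define X' where "X' = {a'\<in>A. r a' < r a}"
    define Ti where "Ti = {a'\<in>A. r a' = r a}"
    define x where "x = card X"
    define \<rho> where "\<rho> = r a"
    have finX: "finite X" "finite X'" "finite Ti" using finA unfolding X_def X'_def Ti_def by auto
    have s: "2 * sum r X = x * (x + 1)" "\<rho> = x \<or> \<rho> = x + 1"
      using st[OF a] unfolding X_def x_def \<rho>_def by auto
    have aX: "a \<in> X" using a unfolding X_def by auto
    then have x1: "x \<ge> 1" using finX unfolding x_def by (metis One_nat_def Suc_leI card_gt_0_iff empty_iff)
    have XT: "X = X' \<union> Ti" "X' \<inter> Ti = {}" unfolding X_def X'_def Ti_def by auto
    have sT: "sum r Ti = card Ti * \<rho>" unfolding \<rho>_def Ti_def by simp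
    have cX: "x = card X' + card Ti" using XT finX unfolding x_def by (simp add: card_Un_disjoint)
    have sX: "sum r X = sum r X' + card Ti * \<rho>" using XT finX sT by (simp add: sum.union_disjoint)
    have "card Ti = 1"
    proof (cases "X' = {}")
      case True
      then have "x = card Ti" "2 * (card Ti * \<rho>) = x * (x+1)" using cX sX s by auto
      then have "x * (2 * \<rho>) = x * (x+1)" by (simp add: algebra_simps)
      moreover have "x \<noteq> 0" using x1 by simp
      ultimately have "2 * \<rho> = x + 1" by (metis mult_left_cancel)
      then have "x = 1" using s(2) by auto
      then show ?thesis using \<open>x = card Ti\<close> by simp
    next
      case False
      have "r ` X' \<noteq> {}" "finite (r ` X')" using False finX by auto
      then have "Max (r ` X') \<in> r ` X'" using Max_in by blast
      then obtain a' where a': "a' \<in> X'" "r a' = Max (r ` X')" by auto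
      have mx: "\<forall>b\<in>X'. r b \<le> r a'" using a' finX by simp
      have a'A: "a' \<in> A" using a' unfolding X'_def by auto
      have XX: "{b\<in>A. r b \<le> r a'} = X'" using mx a' unfolding X'_def by fastforce
      have s': "2 * sum r X' = card X' * (card X' + 1)" using st[OF a'A] unfolding XX by auto
      define t where "t = card Ti"
      define y where "y = card X'"
      have "2 * (sum r X' + t * \<rho>) = (y + t) * (y + t + 1)" using s(1) sX cX unfolding t_def y_def by simp
      then have "y * (y+1) + t * (2 * \<rho>) = y*(y+1) + t * (2*y + t + 1)" using s' unfolding y_def
        by (simp add: algebra_simps)
      then have e: "t * (2 * \<rho>) = t * (2*y + t + 1)" by simp
      have "t \<ge> 1" unfolding t_def using finX a unfolding Ti_def
        by (metis (mono_tags, lifting) One_nat_def Suc_leI card_gt_0_iff empty_iff mem_Collect_eq)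
      then have "t \<noteq> 0" by simp
      then have "2 * \<rho> = 2*y + t + 1" using e by (metis mult_left_cancel)
      then show ?thesis using s(2) cX unfolding t_def y_def by auto
    qed
    then show ?thesis using s(2) x1 unfolding Ti_def \<rho>_def by auto
  qed
  have "inj_on r A"
  proof (rule inj_onI)
    fix a b assume ab: "a \<in> A" "b \<in> A" "r a = r b"
    have "card {a'\<in>A. r a' = r a} = 1" using main ab by auto
    then obtain c where "{a'\<in>A. r a' = r a} = {c}" by (meson card_1_singletonE)
    then show "a = b" using ab by (metis (mono_tags, lifting) mem_Collect_eq singletonD)
  qed
  then show ?thesis using main by auto
qed

lemma sum_tail: "2 * (\<Sum>j\<in>{Suc k..k+d}. (k+d) - j) = d*d - d"
proof (induction d arbitrary: k)
  case 0 then show ?case by simp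
next
  case (Suc d)
  have IH: "2 * (\<Sum>j\<in>{Suc (Suc k)..Suc k+d}. (Suc k+d) - j) = d*d - d" using Suc.IH[of "Suc k"] .
  have s: "{Suc k..k + Suc d} = insert (Suc k) {Suc (Suc k)..Suc k+d}" by auto
  have "(\<Sum>j\<in>{Suc k..k+Suc d}. (k+Suc d) - j) = d + (\<Sum>j\<in>{Suc (Suc k)..Suc k+d}. (Suc k+d) - j)"
    unfolding s by simp
  then have "2 * (\<Sum>j\<in>{Suc k..k+Suc d}. (k+Suc d) - j) = 2*d + (d*d - d)" using IH by simp
  also have "\<dots> = Suc d * Suc d - Suc d" by (cases d) (simp_all add: algebra_simps)
  finally show ?case .
qed

lemma trans_score:
  fixes W :: "'a set" and E :: "'a \<Rightarrow> 'a \<Rightarrow> bool" and \<psi> :: "'a \<Rightarrow> nat"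
  assumes fin: "finite W"
    and irr: "\<forall>x\<in>W. \<not> E x x"
    and tot: "\<forall>x\<in>W. \<forall>y\<in>W. x \<noteq> y \<longrightarrow> (E x y \<longleftrightarrow> \<not> E y x)"
    and bij: "bij_betw \<psi> W {1..n}"
    and deg: "\<forall>w\<in>W. card {z\<in>W. E w z} = n - \<psi> w"
    and w: "w \<in> W" "w' \<in> W" "\<psi> w < \<psi> w'"
  shows "E w w'"
proof -
  define k where "k = \<psi> w"
  define Y where "Y = {y\<in>W. k < \<psi> y}"
  have kn: "k \<le> n" using bij w unfolding k_def bij_betw_def by auto
  have bY: "bij_betw \<psi> Y {Suc k..n}"
  proof -
    have "inj_on \<psi> Y" using bij unfolding bij_betw_def Y_def by (auto intro: inj_on_subset)
    moreover have "\<psi> ` Y = {Suc k..n}"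
    proof
      show "\<psi> ` Y \<subseteq> {Suc k..n}" using bij unfolding Y_def bij_betw_def by auto
      show "{Suc k..n} \<subseteq> \<psi> ` Y"
      proof
        fix j assume j: "j \<in> {Suc k..n}"
        then have "j \<in> \<psi> ` W" using bij unfolding bij_betw_def by auto
        then obtain y where "y \<in> W" "j = \<psi> y" by auto
        then show "j \<in> \<psi> ` Y" using j unfolding Y_def by auto
      qed
    qed
    ultimately show ?thesis unfolding bij_betw_def by simp
  qed
  have cY: "card Y = n - k" using bij_betw_same_card[OF bY] by simp
  have "(\<Sum>y\<in>Y. card {z\<in>W. E y z}) = (\<Sum>y\<in>Y. n - \<psi> y)"
    using deg unfolding Y_def by simp
  also have "\<dots> = (\<Sum>j\<in>{Suc k..n}. n - j)" using sum.reindex_bij_betw[OF bY, of "\<lambda>j. n - j"] by simp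
  finally have sY: "2 * (\<Sum>y\<in>Y. card {z\<in>W. E y z}) = (n-k)*(n-k) - (n-k)"
    using sum_tail[of k "n-k"] kn by simp
  have "2 * (\<Sum>y\<in>Y. card {z\<in>W. E y z}) = card Y * card Y - card Y + 2 * card (SIGMA y:Y. {z\<in>W-Y. E y z})"
    by (rule tour_count[OF fin _ irr tot]) (auto simp: Y_def)
  then have "card (SIGMA y:Y. {z\<in>W-Y. E y z}) = 0" using sY cY by simp
  moreover have "finite (SIGMA y:Y. {z\<in>W-Y. E y z})" using fin unfolding Y_def by auto
  ultimately have emp: "(SIGMA y:Y. {z\<in>W-Y. E y z}) = {}" by simp
  have "w' \<in> Y" "w \<in> W - Y" using w unfolding Y_def k_def by auto
  then have "\<not> E w' w" using emp by blast
  moreover have "w \<noteq> w'" using w by auto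
  ultimately show ?thesis using tot w by blast
qed

theorem theorem3p8:
  fixes V :: "'a set" and E :: "'a \<Rightarrow> 'a \<Rightarrow> bool" and v :: 'a and m :: nat
  assumes "regular_tournament V E"
    and "card V = 2*m+1"
    and "v \<in> V"
    and "\<not> (\<exists>p q r s. distinct [p, q, r, s] \<and> E p q \<and> E q r \<and> E r s \<and> E s p
              \<and> p \<in> out_nbrs V E v \<and> r \<in> out_nbrs V E v
              \<and> q \<in> in_nbrs V E v \<and> s \<in> in_nbrs V E v)"
  shows "cyclic_tournament V E"
proof -
  note R = assms(1)[unfolded regular_tournament_def]
  have tour: "tournament V E" using R by (rule conjunct1)
  have reg: "\<forall>u\<in>V. \<forall>w\<in>V. card (out_nbrs V E u) = card (out_nbrs V E w)"
    using conjunct2[OF R] by blast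
  note T = tour[unfolded tournament_def]
  have finV: "finite V" using T by (rule conjunct1)
  have Ein': "\<forall>u w. E u w \<longrightarrow> u \<in> V \<and> w \<in> V" using T by (elim conjE)
  then have Ein: "\<And>u w. E u w \<Longrightarrow> u \<in> V \<and> w \<in> V" by blast
  have irr: "\<forall>u\<in>V. \<not> E u u" using T by (elim conjE)
  have tot: "\<forall>u\<in>V. \<forall>w\<in>V. u \<noteq> w \<longrightarrow> (E u w \<longleftrightarrow> \<not> E w u)" using T by (elim conjE)
  have vV: "v \<in> V" by (rule assms(3))
  define A where "A = out_nbrs V E v"
  define B where "B = in_nbrs V E v"
  have od: "\<forall>u\<in>V. card {z\<in>V. E u z} = m"
  proof -
    define d where "d = card {z\<in>V. E v z}"
    have all: "\<forall>u\<in>V. card {z\<in>V. E u z} = d"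
    proof
      fix u assume "u \<in> V"
      then have "card (out_nbrs V E u) = card (out_nbrs V E v)" using reg vV by blast
      then show "card {z\<in>V. E u z} = d" unfolding d_def out_nbrs_def .
    qed
    have tc: "2 * (\<Sum>u\<in>V. card {z\<in>V. E u z}) = card V * card V - card V + 2 * card (SIGMA y:V. {z\<in>V-V. E y z})"
      by (rule tour_count[OF finV _ irr tot]) (rule subset_refl)
    have "(\<Sum>u\<in>V. card {z\<in>V. E u z}) = card V * d" using all by simp
    then have "2 * (card V * d) = card V * card V - card V" using tc by simp
    then have e: "(2*m+1) * (2 * d) = (2*m+1) * (2*m+1) - (2*m+1)" using assms(2) by (simp add: mult.assoc mult.left_commute)
    have "(2*m+1) * (2*m+1) - (2*m+1) = (2*m+1) * (2*m)" by (simp add: algebra_simps)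
    then have "(2*m+1) * (2 * d) = (2*m+1) * (2*m)" using e by simp
    then have "2 * d = 2 * m" using mult_left_cancel[of "2*m+1" "2*d" "2*m"] by simp
    then show ?thesis using all by simp
  qed
  have Ain: "a \<in> A \<longleftrightarrow> a \<in> V \<and> E v a" for a unfolding A_def out_nbrs_def by simp
  have Bin: "b \<in> B \<longleftrightarrow> b \<in> V \<and> E b v" for b unfolding B_def in_nbrs_def by simp
  have AV: "A \<subseteq> V" "B \<subseteq> V" "v \<notin> A" "v \<notin> B" "A \<inter> B = {}"
  proof -
    show "A \<subseteq> V" "B \<subseteq> V" using Ain Bin by auto
    show "v \<notin> A" "v \<notin> B" using Ain Bin irr vV by auto
    show "A \<inter> B = {}"
    proof (rule ccontr)
      assume "A \<inter> B \<noteq> {}"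
      then obtain a where "a \<in> V" "E v a" "E a v" using Ain Bin by auto
      then show False using tot vV irr by metis
    qed
  qed
  have VAB: "V = insert v (A \<union> B)"
  proof (rule set_eqI)
    fix u show "u \<in> V \<longleftrightarrow> u \<in> insert v (A \<union> B)"
    proof
      assume u: "u \<in> V"
      show "u \<in> insert v (A \<union> B)"
      proof (cases "u = v")
        case False then have "E v u \<or> E u v" using tot u vV by metis
        then show ?thesis using Ain Bin u by auto
      qed simp
    next
      assume "u \<in> insert v (A \<union> B)" then show "u \<in> V" using vV Ain Bin by auto
    qed
  qed
  have finAB: "finite A" "finite B" using AV(1,2) finV by (auto intro: finite_subset)
  have cA: "card A = m" using od vV unfolding A_def out_nbrs_def by auto
  have cB: "card B = m"
  proof -
    have "card V = Suc (card A + card B)" using VAB AV finAB by (simp add: card_Un_disjoint)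
    then show ?thesis using cA assms(2) by simp
  qed
  define N where "N = (\<lambda>a. {b\<in>B. E a b})"
  define r where "r = (\<lambda>a. card (N a))"
  define c where "c = (\<lambda>b. card {a\<in>A. E a b})"
  have finN: "finite (N a)" for a using finAB unfolding N_def by auto
  have totE: "E y x" if "x \<in> V" "y \<in> V" "x \<noteq> y" "\<not> E x y" for x y
    using tot that by blast
  have totN: "\<not> E y x" if "x \<in> V" "y \<in> V" "E x y" for x y
  proof (cases "x = y")
    case True then show ?thesis using irr that by blast
  next
    case False then show ?thesis using tot that by blast
  qed
  have vnot: "\<not> E a v" if "a \<in> A" for a
    using that Ain totN vV by blast
  have degA: "card {z\<in>A. E a z} + r a = m" if a: "a \<in> A" for a
  proof -
    have aV: "a \<in> V" using a AV by auto
    have "{z\<in>V. E a z} = {z\<in>A. E a z} \<union> N a"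
    proof (rule set_eqI)
      fix z show "z \<in> {z\<in>V. E a z} \<longleftrightarrow> z \<in> {z\<in>A. E a z} \<union> N a"
        using VAB vnot[OF a] AV(1,2) unfolding N_def by auto
    qed
    moreover have "{z\<in>A. E a z} \<inter> N a = {}" using AV(5) unfolding N_def by auto
    ultimately have "card {z\<in>V. E a z} = card {z\<in>A. E a z} + card (N a)"
      using finAB finN by (simp add: card_Un_disjoint)
    then show ?thesis using od aV unfolding r_def by simp
  qed
  have degB: "card {z\<in>B. E b z} + 1 = c b" if b: "b \<in> B" for b
  proof -
    have bV: "b \<in> V" using b AV by auto
    have Ebv: "E b v" using b Bin by auto
    have nab: "a \<noteq> b" if "a \<in> A" for a using that b AV(5) by auto
    have eq1: "{a\<in>A. E b a} = A - {a\<in>A. E a b}"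
    proof (rule set_eqI)
      fix a show "a \<in> {a\<in>A. E b a} \<longleftrightarrow> a \<in> A - {a\<in>A. E a b}"
      proof (cases "a \<in> A")
        case True
        then have "a \<in> V" using AV by auto
        then show ?thesis using totE[of a b] totN[of a b] bV nab[OF True] True by blast
      qed simp
    qed
    have "{z\<in>V. E b z} = insert v ({a\<in>A. E b a} \<union> {z\<in>B. E b z})"
    proof (rule set_eqI)
      fix z show "z \<in> {z\<in>V. E b z} \<longleftrightarrow> z \<in> insert v ({a\<in>A. E b a} \<union> {z\<in>B. E b z})"
        using VAB Ebv vV AV(1,2) by auto
    qed
    moreover have "v \<notin> {a\<in>A. E b a} \<union> {z\<in>B. E b z}" using AV by auto
    moreover have "{a\<in>A. E b a} \<inter> {z\<in>B. E b z} = {}" using AV(5) by auto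
    ultimately have "card {z\<in>V. E b z} = Suc (card {a\<in>A. E b a} + card {z\<in>B. E b z})"
      using finAB by (simp add: card_Un_disjoint)
    moreover have "card {a\<in>A. E b a} = m - c b" unfolding eq1 c_def using finAB cA
      by (simp add: card_Diff_subset)
    moreover have "c b \<le> m" unfolding c_def using finAB cA by (metis (no_types, lifting) card_mono mem_Collect_eq subsetI)
    ultimately show ?thesis using od bV by simp
  qed
  have chain: "N a1 \<subseteq> N a2 \<or> N a2 \<subseteq> N a1" if a12: "a1 \<in> A" "a2 \<in> A" for a1 a2
  proof (rule ccontr)
    assume "\<not> (N a1 \<subseteq> N a2 \<or> N a2 \<subseteq> N a1)"
    then obtain b1 b2 where b1: "b1 \<in> N a1" "b1 \<notin> N a2" and b2: "b2 \<in> N a2" "b2 \<notin> N a1" by auto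
    have bB: "b1 \<in> B" "b2 \<in> B" "E a1 b1" "E a2 b2" using b1 b2 unfolding N_def by auto
    have "\<not> E a2 b1" using b1 bB unfolding N_def by auto
    moreover have "a2 \<in> V" "b1 \<in> V" "a2 \<noteq> b1" using a12 bB AV by auto
    ultimately have E1: "E b1 a2" using totE by blast
    have "\<not> E a1 b2" using b2 bB unfolding N_def by auto
    moreover have "a1 \<in> V" "b2 \<in> V" "a1 \<noteq> b2" using a12 bB AV by auto
    ultimately have E2: "E b2 a1" using totE by blast
    have "a1 \<noteq> a2" using b1 b2 by auto
    moreover have "b1 \<noteq> b2" using b1 b2 by auto
    moreover have "a1 \<noteq> b1" "a1 \<noteq> b2" "a2 \<noteq> b1" "a2 \<noteq> b2" using a12 bB AV(5) by auto
    ultimately have "distinct [a1, b1, a2, b2]" by auto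
    then show False using assms(4) E1 E2 bB a12 unfolding A_def B_def by blast
  qed
  have nested: "N a1 \<subseteq> N a2" if a12: "a1 \<in> A" "a2 \<in> A" "r a1 \<le> r a2" for a1 a2
  proof -
    { assume "N a2 \<subseteq> N a1"
      then have "N a2 = N a1" using card_subset_eq[OF finN] a12(3) card_mono[OF finN] unfolding r_def
        by (metis le_antisym)
      then have ?thesis by simp }
    then show ?thesis using chain[OF a12(1,2)] by blast
  qed
  have rle: "\<forall>a\<in>A. r a \<le> m" unfolding r_def N_def using finAB cB
    by (metis (no_types, lifting) card_mono mem_Collect_eq subsetI)
  have irrA: "\<forall>x\<in>A. \<not> E x x" and totA: "\<forall>x\<in>A. \<forall>y\<in>A. x \<noteq> y \<longrightarrow> (E x y \<longleftrightarrow> \<not> E y x)"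
    using irr tot AV(1) by blast+
  have irrB: "\<forall>x\<in>B. \<not> E x x" and totB: "\<forall>x\<in>B. \<forall>y\<in>B. x \<noteq> y \<longrightarrow> (E x y \<longleftrightarrow> \<not> E y x)"
    using irr tot AV(2) by blast+
  have totr: "2 * sum r A = m*(m+1)"
  proof -
    have tc: "2 * (\<Sum>a\<in>A. card {z\<in>A. E a z}) = card A * card A - card A + 2 * card (SIGMA y:A. {z\<in>A-A. E y z})"
      by (rule tour_count[OF finAB(1) _ irrA totA]) (rule subset_refl)
    have "(\<Sum>a\<in>A. card {z\<in>A. E a z}) + sum r A = (\<Sum>a\<in>A. card {z\<in>A. E a z} + r a)"
      by (simp add: sum.distrib)
    also have "\<dots> = (\<Sum>a\<in>A. m)" using degA by simp
    finally have s: "(\<Sum>a\<in>A. card {z\<in>A. E a z}) + sum r A = m * m" using cA by simp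
    have "m \<le> m * m" by (cases m) auto
    moreover have "2 * (\<Sum>a\<in>A. card {z\<in>A. E a z}) = m * m - m" using tc cA by simp
    moreover have "m*(m+1) = m*m + m" by simp
    ultimately show ?thesis using s by linarith
  qed
  have lowr: "\<forall>X\<subseteq>A. card X * (card X + 1) \<le> 2 * sum r X"
  proof (intro allI impI)
    fix X assume X: "X \<subseteq> A"
    define x where "x = card X"
    have finX: "finite X" using X finAB finite_subset by blast
    have xm: "x \<le> m" unfolding x_def using X finAB cA card_mono by blast
    have tc: "2 * (\<Sum>a\<in>X. card {z\<in>A. E a z}) = card X * card X - card X + 2 * card (SIGMA y:X. {z\<in>A-X. E y z})"
      by (rule tour_count[OF finAB(1) X irrA totA])
    have "card (SIGMA y:X. {z\<in>A-X. E y z}) \<le> card (X \<times> (A - X))"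
      by (rule card_mono) (auto simp: finX finAB)
    also have "\<dots> = x * (m - x)" unfolding x_def using X finAB cA
      by (simp add: card_cartesian_product card_Diff_subset finX)
    finally have cr: "card (SIGMA y:X. {z\<in>A-X. E y z}) \<le> x * m - x * x" by (simp add: diff_mult_distrib2)
    have "(\<Sum>a\<in>X. card {z\<in>A. E a z}) + sum r X = (\<Sum>a\<in>X. card {z\<in>A. E a z} + r a)"
      by (simp add: sum.distrib)
    also have "\<dots> = (\<Sum>a\<in>X. m)" using degA X by (intro sum.cong) auto
    finally have s: "(\<Sum>a\<in>X. card {z\<in>A. E a z}) + sum r X = x * m" unfolding x_def by simp
    have p1: "x \<le> x * x" by (cases x) auto
    have p2: "x * x \<le> x * m" using xm by simp
    have "x * (x + 1) = x * x + x" by simp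
    then show "card X * (card X + 1) \<le> 2 * sum r X" using tc s cr p1 p2 unfolding x_def[symmetric] by linarith
  qed
  have upr: "\<forall>a\<in>A. (m - r a)*(m - r a + 1) \<le> 2 * (\<Sum>a'\<in>{a'\<in>A. r a < r a'}. (r a' - r a))"
  proof
    fix a assume a: "a \<in> A"
    define Y where "Y = B - N a"
    define y where "y = card Y"
    have YB: "Y \<subseteq> B" unfolding Y_def by auto
    have finY: "finite Y" using finAB unfolding Y_def by auto
    have NB: "N a \<subseteq> B" unfolding N_def by auto
    have cy: "y = m - r a" unfolding y_def Y_def r_def using NB finAB cB by (simp add: card_Diff_subset finN)
    have tc: "2 * (\<Sum>b\<in>Y. card {z\<in>B. E b z}) = card Y * card Y - card Y + 2 * card (SIGMA u:Y. {z\<in>B-Y. E u z})"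
      by (rule tour_count[OF finAB(2) YB irrB totB])
    have "(\<Sum>b\<in>Y. c b) = (\<Sum>b\<in>Y. card {z\<in>B. E b z} + 1)" using degB YB by (intro sum.cong) auto
    also have "\<dots> = (\<Sum>b\<in>Y. card {z\<in>B. E b z}) + y" unfolding y_def by (simp only: sum.distrib) simp
    finally have sc: "(\<Sum>b\<in>Y. c b) = (\<Sum>b\<in>Y. card {z\<in>B. E b z}) + y" .
    have p1: "y \<le> y * y" by (cases y) auto
    have low: "y * (y + 1) \<le> 2 * (\<Sum>b\<in>Y. c b)" using tc sc p1 unfolding y_def[symmetric] by simp
    have "(\<Sum>b\<in>Y. c b) = (\<Sum>b\<in>Y. \<Sum>a'\<in>{a'. a' \<in> A \<and> E a' b}. (1::nat))"
      unfolding c_def by simp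
    also have "\<dots> = (\<Sum>a'\<in>A. \<Sum>b\<in>{b. b \<in> Y \<and> E a' b}. (1::nat))"
      using sum.swap_restrict[OF finAB(1) finY, of "\<lambda>_ _. (1::nat)" "\<lambda>a' b. E a' b"] by simp
    also have "\<dots> = (\<Sum>a'\<in>A. card (N a' - N a))"
    proof (rule sum.cong)
      fix a' assume "a' \<in> A"
      have "{b. b \<in> Y \<and> E a' b} = N a' - N a" unfolding Y_def N_def by auto
      then show "(\<Sum>b\<in>{b. b \<in> Y \<and> E a' b}. (1::nat)) = card (N a' - N a)" by simp
    qed simp
    also have "\<dots> = (\<Sum>a'\<in>A. if r a < r a' then r a' - r a else 0)"
    proof (rule sum.cong)
      fix a' assume a': "a' \<in> A"
      show "card (N a' - N a) = (if r a < r a' then r a' - r a else 0)"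
      proof (cases "r a < r a'")
        case True
        then have "N a \<subseteq> N a'" using nested[OF a a'] by simp
        then show ?thesis using True unfolding r_def by (simp add: card_Diff_subset finN)
      next
        case False
        then have "N a' \<subseteq> N a" using nested[OF a' a] by simp
        then have "N a' - N a = {}" by blast
        then have "card (N a' - N a) = 0" by (metis card.empty)
        then show ?thesis using False by simp
      qed
    qed simp
    also have "\<dots> = (\<Sum>a'\<in>{a'\<in>A. r a < r a'}. (r a' - r a))"
      using sum.inter_filter[OF finAB(1), of "\<lambda>a'. r a' - r a" "\<lambda>a'. r a < r a'"] by simp
    finally show "(m - r a)*(m - r a + 1) \<le> 2 * (\<Sum>a'\<in>{a'\<in>A. r a < r a'}. (r a' - r a))"
      using low cy by simp
  qed
  have numr: "inj_on r A \<and> (\<forall>a\<in>A. 1 \<le> r a)"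
    by (rule numeric[OF finAB(1) cA rle totr lowr upr])
  have injr: "inj_on r A" using numr by blast
  have rA: "r ` A = {1..m}"
  proof (rule card_subset_eq)
    show "finite {1..m}" by simp
    show "r ` A \<subseteq> {1..m}" using numr rle by auto
    show "card (r ` A) = card {1..m}" using card_image[OF injr] cA by simp
  qed
  define g where "g = inv_into A r"
  have gA: "g k \<in> A" "r (g k) = k" if "k \<in> {1..m}" for k
    using that rA unfolding g_def by (auto intro: inv_into_into f_inv_into_f)
  define \<phi> where "\<phi> = (\<lambda>b. Min (r ` {a\<in>A. E a b}))"
  have exa: "\<exists>a\<in>A. E a b" if b: "b \<in> B" for b
  proof -
    have m1: "m \<in> {1..m}" using b cB finAB by (cases m) auto
    have "N (g m) \<subseteq> B" unfolding N_def by auto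
    moreover have "card (N (g m)) = card B" using gA[OF m1] cB unfolding r_def by simp
    ultimately have "N (g m) = B" using finAB by (simp add: card_subset_eq)
    then show ?thesis using b gA[OF m1] unfolding N_def by auto
  qed
  have P3: "E a b \<longleftrightarrow> \<phi> b \<le> r a" if a: "a \<in> A" and b: "b \<in> B" for a b
  proof
    assume "E a b"
    then show "\<phi> b \<le> r a" unfolding \<phi>_def using a finAB by (intro Min_le) auto
  next
    assume le: "\<phi> b \<le> r a"
    have "r ` {a\<in>A. E a b} \<noteq> {}" "finite (r ` {a\<in>A. E a b})" using exa[OF b] finAB by auto
    then have "\<phi> b \<in> r ` {a\<in>A. E a b}" unfolding \<phi>_def using Min_in by blast
    then obtain a0 where a0: "a0 \<in> A" "E a0 b" "r a0 = \<phi> b" by auto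
    then have "N a0 \<subseteq> N a" using nested[OF a0(1) a] le by simp
    then show "E a b" using a0 b unfolding N_def by auto
  qed
  have phir: "\<phi> b \<in> {1..m}" if b: "b \<in> B" for b
  proof -
    have "r ` {a\<in>A. E a b} \<noteq> {}" "finite (r ` {a\<in>A. E a b})" using exa[OF b] finAB by auto
    then have "\<phi> b \<in> r ` {a\<in>A. E a b}" unfolding \<phi>_def using Min_in by blast
    then show ?thesis using rA by auto
  qed
  have cnt: "card {b\<in>B. \<phi> b \<le> k} = k" if k: "k \<le> m" for k
  proof (cases "k = 0")
    case True
    have "{b\<in>B. \<phi> b \<le> k} = {}" using phir True by fastforce
    then show ?thesis using True by (metis card.empty)
  next
    case False
    then have k1: "k \<in> {1..m}" using k by auto
    have "{b\<in>B. \<phi> b \<le> k} = N (g k)" unfolding N_def using P3 gA[OF k1] by auto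
    then show ?thesis using gA[OF k1] unfolding r_def by simp
  qed
  have injphi: "inj_on \<phi> B"
  proof (rule inj_onI)
    fix b b' assume bb: "b \<in> B" "b' \<in> B" "\<phi> b = \<phi> b'"
    define k where "k = \<phi> b"
    have k1: "k \<in> {1..m}" using phir bb unfolding k_def by auto
    have sub: "{x\<in>B. \<phi> x \<le> k - 1} \<subseteq> {x\<in>B. \<phi> x \<le> k}" by auto
    have c1: "card {x\<in>B. \<phi> x \<le> k - 1} = k - 1" using cnt[of "k-1"] k1 by (metis atLeastAtMost_iff diff_le_self le_trans)
    have "card ({x\<in>B. \<phi> x \<le> k} - {x\<in>B. \<phi> x \<le> k - 1}) = k - (k - 1)"
      using card_Diff_subset[OF _ sub] cnt[of k] c1 k1 finAB by simp
    then have "card ({x\<in>B. \<phi> x \<le> k} - {x\<in>B. \<phi> x \<le> k - 1}) = 1" using k1 by simp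
    then obtain z where z: "{x\<in>B. \<phi> x \<le> k} - {x\<in>B. \<phi> x \<le> k - 1} = {z}" by (meson card_1_singletonE)
    have "b \<in> {x\<in>B. \<phi> x \<le> k} - {x\<in>B. \<phi> x \<le> k - 1}" "b' \<in> {x\<in>B. \<phi> x \<le> k} - {x\<in>B. \<phi> x \<le> k - 1}"
      using bb k1 unfolding k_def by auto
    then show "b = b'" unfolding z by simp
  qed
  have phiB: "\<phi> ` B = {1..m}"
  proof (rule card_subset_eq)
    show "finite {1..m}" by simp
    show "\<phi> ` B \<subseteq> {1..m}" using phir by auto
    show "card (\<phi> ` B) = card {1..m}" using card_image[OF injphi] cB by simp
  qed
  define h where "h = inv_into B \<phi>"
  have hB: "h k \<in> B" "\<phi> (h k) = k" if "k \<in> {1..m}" for k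
    using that phiB unfolding h_def by (auto intro: inv_into_into f_inv_into_f)
  have cphi: "c b = m + 1 - \<phi> b" if b: "b \<in> B" for b
  proof -
    have "{a\<in>A. E a b} = {a\<in>A. \<phi> b \<le> r a}" using P3 b by auto
    moreover have "r ` {a\<in>A. \<phi> b \<le> r a} = {\<phi> b..m}"
    proof
      show "r ` {a\<in>A. \<phi> b \<le> r a} \<subseteq> {\<phi> b..m}" using rle by auto
      show "{\<phi> b..m} \<subseteq> r ` {a\<in>A. \<phi> b \<le> r a}"
      proof
        fix j assume j: "j \<in> {\<phi> b..m}"
        then have j1: "j \<in> {1..m}" using phir[OF b] by auto
        then show "j \<in> r ` {a\<in>A. \<phi> b \<le> r a}" using gA[OF j1] j by (auto intro!: image_eqI[of j r "g j"])
      qed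
    qed
    moreover have "card {a\<in>A. \<phi> b \<le> r a} = card (r ` {a\<in>A. \<phi> b \<le> r a})"
      using injr by (simp add: card_image inj_on_subset)
    ultimately show ?thesis unfolding c_def by simp
  qed
  have bijr: "bij_betw r A {1..m}" using injr rA unfolding bij_betw_def by simp
  have bijphi: "bij_betw \<phi> B {1..m}" using injphi phiB unfolding bij_betw_def by simp
  have transA: "E a a'" if "a \<in> A" "a' \<in> A" "r a < r a'" for a a'
  proof (rule trans_score[OF finAB(1) irrA totA bijr _ that])
    show "\<forall>w\<in>A. card {z\<in>A. E w z} = m - r w" using degA by (metis add_diff_cancel_right')
  qed
  have transB: "E b b'" if "b \<in> B" "b' \<in> B" "\<phi> b < \<phi> b'" for b b'
  proof (rule trans_score[OF finAB(2) irrB totB bijphi _ that])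
    show "\<forall>w\<in>B. card {z\<in>B. E w z} = m - \<phi> w"
    proof
      fix w assume w: "w \<in> B"
      show "card {z\<in>B. E w z} = m - \<phi> w" using degB[OF w] cphi[OF w] phir[OF w] by simp
    qed
  qed
  define f where "f = (\<lambda>p::nat. if p = 1 then v else if p \<le> m+1 then g (p-1) else h (p-m-1))"
  have fA: "f p = g (p-1)" "g (p-1) \<in> A" "r (g (p-1)) = p - 1" if "2 \<le> p" "p \<le> m+1" for p
  proof -
    have "p - 1 \<in> {1..m}" using that by auto
    then show "f p = g (p-1)" "g (p-1) \<in> A" "r (g (p-1)) = p - 1" using gA that unfolding f_def by auto
  qed
  have fB: "f p = h (p-m-1)" "h (p-m-1) \<in> B" "\<phi> (h (p-m-1)) = p - m - 1" if "m+2 \<le> p" "p \<le> 2*m+1" for p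
  proof -
    have "p - m - 1 \<in> {1..m}" using that by auto
    then show "f p = h (p-m-1)" "h (p-m-1) \<in> B" "\<phi> (h (p-m-1)) = p - m - 1" using hB that unfolding f_def by auto
  qed
  have f1: "f 1 = v" unfolding f_def by simp
  have img: "f ` {1..2*m+1} = V"
  proof
    show "f ` {1..2*m+1} \<subseteq> V"
    proof
      fix u assume "u \<in> f ` {1..2*m+1}"
      then obtain p where p: "p \<in> {1..2*m+1}" "u = f p" by auto
      show "u \<in> V"
      proof (cases "p = 1")
        case True then show ?thesis using p f1 vV by simp
      next
        case False
        show ?thesis
        proof (cases "p \<le> m+1")
          case True then show ?thesis using fA[of p] False p AV by auto
        next
          case F2: False then show ?thesis using fB[of p] p AV by auto
        qed
      qed
    qed
    show "V \<subseteq> f ` {1..2*m+1}"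
    proof
      fix u assume u: "u \<in> V"
      show "u \<in> f ` {1..2*m+1}"
      proof (cases "u = v")
        case True then show ?thesis using f1 by (auto intro!: image_eqI[of _ _ 1])
      next
        case False
        then have "u \<in> A \<or> u \<in> B" using u VAB by auto
        then show ?thesis
        proof
          assume a: "u \<in> A"
          then have ra: "r u \<in> {1..m}" using rA by auto
          have "f (r u + 1) = g (r u)" using fA[of "r u + 1"] ra by auto
          also have "\<dots> = u" unfolding g_def using injr a by (simp add: inv_into_f_f)
          finally show ?thesis using ra by (auto intro!: image_eqI[of _ _ "r u + 1"])
        next
          assume b: "u \<in> B"
          then have pb: "\<phi> u \<in> {1..m}" using phiB by auto
          have "f (\<phi> u + m + 1) = h (\<phi> u)" using fB[of "\<phi> u + m + 1"] pb by auto
          also have "\<dots> = u" unfolding h_def using injphi b by (simp add: inv_into_f_f)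
          finally show ?thesis using pb by (auto intro!: image_eqI[of _ _ "\<phi> u + m + 1"])
        qed
      qed
    qed
  qed
  have bij: "bij_betw f {1..2*m+1} V"
  proof -
    have "inj_on f {1..2*m+1}" using img assms(2) by (simp add: inj_on_iff_eq_card)
    then show ?thesis using img unfolding bij_betw_def by simp
  qed
  have edges: "\<forall>i j. 1 \<le> i \<longrightarrow> i < j \<longrightarrow> j \<le> 2*m+1 \<longrightarrow> (E (f i) (f j) \<longleftrightarrow> j - i \<le> m)"
  proof (intro allI impI)
    fix i j :: nat assume ij: "1 \<le> i" "i < j" "j \<le> 2*m+1"
    show "E (f i) (f j) \<longleftrightarrow> j - i \<le> m"
    proof (cases "i = 1")
      case True
      show ?thesis
      proof (cases "j \<le> m+1")
        case jA: True
        then have "f j \<in> A" using fA[of j] ij True by auto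
        then show ?thesis using True f1 jA Ain by auto
      next
        case jB: False
        then have "f j \<in> B" using fB[of j] ij by auto
        then have "\<not> E v (f j)" using Bin totN vV by blast
        then show ?thesis using True f1 jB by auto
      qed
    next
      case False
      show ?thesis
      proof (cases "i \<le> m+1")
        case iA: True
        note fi = fA[of i]
        show ?thesis
        proof (cases "j \<le> m+1")
          case jA: True
          note fj = fA[of j]
          have "E (f i) (f j)" using fi fj ij False iA jA transA[of "g (i-1)" "g (j-1)"] by auto
          then show ?thesis using iA jA ij False by auto
        next
          case jB: False
          note fj = fB[of j]
          have "E (f i) (f j) \<longleftrightarrow> \<phi> (f j) \<le> r (f i)"
            using P3[of "f i" "f j"] fi fj ij False iA jB by auto
          then show ?thesis using fi fj ij False iA jB by auto
        qed
      next
        case iB: False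
        note fi = fB[of i] and fj = fB[of j]
        have "E (f i) (f j)" using fi fj ij iB transB[of "h (i-m-1)" "h (j-m-1)"] by auto
        then show ?thesis using ij iB by auto
      qed
    qed
  qed
  show ?thesis unfolding cyclic_tournament_def using assms(2) bij edges by blast
qed

end
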